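(* Consider two instances of the baseline diffusion model that differ only in the new product's specification: $((v_{Hi})_{i=1}^N,s_p)$ in the first and $((v'_{Hi})_{i=1}^N,s'_p)$ in the second. Suppose $v'_{Hi}\ge v_{Hi}$ for all $i$ and $s'_p\ge s_p$. Let $D_n^t$ and $D_n'^t$ be the corresponding sets of new-product consumers. Then $D_n^t\subseteq D_n'^t$ for all $t\ge1$; equivalently, the thresholds of Proposition 1 satisfy $\underline H_t\ge\underline H'_t$ for all $t\ge2$.
   Context: Baseline diffusion model. There are $N\ge 2$ individuals $i\in\{1,\dots,N\}$ and two products, an incumbent $p_c$ and a new product $p_n$. The individuals are partitioned into $G\ge 2$ nonempty groups $N_1,\dots,N_G$. Every member of group $N_k$ has the same aspiration level $H_{N_k}$, and $H_{N_1}>\cdots>H_{N_G}$; write $H_i$ for individual $i$'s aspiration level. Consuming $p_c$ gives every individual the payoff $v_L$, where $H_{N_2}<v_L<H_{N_1}$. Consuming $p_n$ gives individual $i$ the payoff $v_{Hi}\ge H_{N_1}$. Product similarities are $s_{p_c,p_c}=s_{p_n,p_n}=1$, $s_{p_n,p_c}=s_p\in(0,1)$ and $s_{p_c,p_n}=0$. Individual similarities are $s_{i,i}=1$ and $s_{i,j}=s\in(0,1]$ for $i\ne j$. Dynamics. In period $0$ everyone consumes $p_c$ ($D_c^0=\{1,\dots,N\}$, $D_n^0=\emptyset$). For $t\ge1$, $U_i^t(p_c)=\sum_{t'=0}^{t-1}\sum_{j\in D_c^{t'}}s_{i,j}(v_L-H_i)$ and $U_i^t(p_n)=s_pU_i^t(p_c)+\sum_{t'=0}^{t-1}\sum_{j\in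 D_n^{t'}}s_{i,j}(v_{Hj}-H_i)$. Individual $i\in D_n^t$ iff $U_i^t(p_n)>U_i^t(p_c)$; otherwise $i\in D_c^t$. By Proposition 1, in every period $t$ the set $D_n^t$ equals $\{i:H_i>\underline H_t\}$ for some threshold $\underline H_t\in\mathbb R\cup\{-\infty\}$. *)

theory Defs
  imports "HOL-Analysis.Analysis"
begin

text \<open>Individuals are 0,...,N-1. Parameters:
  N (number of individuals), H (aspiration level of each individual),
  vL (payoff of the incumbent), vH (payoff of the new product, per individual),
  sp (product similarity s_{p_n,p_c}), s (similarity between distinct individuals).\<close>

definition ind_sim :: "real \<Rightarrow> nat \<Rightarrow> nat \<Rightarrow> real" where
  "ind_sim s i j = (if i = j then 1 else s)"

text \<open>Given the history of new-product consumer sets in periods 0..t-1 (as list of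
  length t), utilities in period t.\<close>
definition U_c :: "nat \<Rightarrow> (nat \<Rightarrow> real) \<Rightarrow> real \<Rightarrow> real \<Rightarrow> nat set list \<Rightarrow> nat \<Rightarrow> real" where
  "U_c N H vL s hist i =
     (\<Sum>t'<length hist. \<Sum>j\<in>{..<N} - hist ! t'. ind_sim s i j * (vL - H i))"

definition U_n :: "nat \<Rightarrow> (nat \<Rightarrow> real) \<Rightarrow> real \<Rightarrow> (nat \<Rightarrow> real) \<Rightarrow> real \<Rightarrow> real
                    \<Rightarrow> nat set list \<Rightarrow> nat \<Rightarrow> real" where
  "U_n N H vL vH sp s hist i =
     sp * U_c N H vL s hist i +
     (\<Sum>t'<length hist. \<Sum>j\<in>hist ! t'. ind_sim s i j * (vH j - H i))"

primrec Dn_hist :: "nat \<Rightarrow> (nat \<Rightarrow> real) \<Rightarrow> real \<Rightarrow> (nat \<Rightarrow> real) \<Rightarrow> real \<Rightarrow> real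
                     \<Rightarrow> nat \<Rightarrow> nat set list" where
  "Dn_hist N H vL vH sp s 0 = [{}]"
| "Dn_hist N H vL vH sp s (Suc t) =
     (let hist = Dn_hist N H vL vH sp s t in
      hist @ [{i. i < N \<and> U_n N H vL vH sp s hist i > U_c N H vL s hist i}])"

text \<open>Set D_n^t of new-product consumers in period t (D_c^t is the complement in {..<N}).\<close>
definition Dn :: "nat \<Rightarrow> (nat \<Rightarrow> real) \<Rightarrow> real \<Rightarrow> (nat \<Rightarrow> real) \<Rightarrow> real \<Rightarrow> real
                   \<Rightarrow> nat \<Rightarrow> nat set" where
  "Dn N H vL vH sp s t = Dn_hist N H vL vH sp s t ! t"

definition baseline_model ::
  "nat \<Rightarrow> nat \<Rightarrow> (nat \<Rightarrow> nat) \<Rightarrow> (nat \<Rightarrow> real) \<Rightarrow> (nat \<Rightarrow> real) \<Rightarrow> real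
   \<Rightarrow> (nat \<Rightarrow> real) \<Rightarrow> real \<Rightarrow> real \<Rightarrow> bool" where
  "baseline_model N G grp Hg H vL vH sp s \<longleftrightarrow>
     N \<ge> 2 \<and> G \<ge> 2 \<and>
     (\<forall>i<N. grp i < G) \<and> (\<forall>k<G. \<exists>i<N. grp i = k) \<and>
     (\<forall>k l. k < l \<and> l < G \<longrightarrow> Hg l < Hg k) \<and>
     (\<forall>i<N. H i = Hg (grp i)) \<and>
     Hg 1 < vL \<and> vL < Hg 0 \<and>
     (\<forall>i<N. vH i \<ge> Hg 0) \<and>
     0 < sp \<and> sp < 1 \<and> 0 < s \<and> s \<le> 1"

end

theory Submission
  imports Defs
begin

lemma len_hist: "length (Dn_hist N H vL vH sp s t) = Suc t"
  by (induction t) (simp_all add: Let_def)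

lemma hist_nth: "k \<le> t \<Longrightarrow> Dn_hist N H vL vH sp s t ! k = Dn N H vL vH sp s k"
proof (induction t)
  case 0 then show ?case by (simp add: Dn_def)
next
  case (Suc t)
  show ?case
  proof (cases "k = Suc t")
    case True then show ?thesis by (simp add: Dn_def)
  next
    case False
    then have "k \<le> t" using Suc by simp
    then show ?thesis using Suc len_hist[of N H vL vH sp s t]
      by (simp add: Let_def nth_append)
  qed
qed

lemma Dn_Suc: "Dn N H vL vH sp s (Suc t) =
   {i. i < N \<and> U_n N H vL vH sp s (Dn_hist N H vL vH sp s t) i > U_c N H vL s (Dn_hist N H vL vH sp s t) i}"
  using len_hist[of N H vL vH sp s t] by (simp add: Dn_def Let_def nth_append)

lemma Dn_sub: "Dn N H vL vH sp s k \<subseteq> {..<N}"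
  by (cases k) (auto simp: Dn_Suc, simp add: Dn_def)

lemma hist_sub: "t' < length (Dn_hist N H vL vH sp s t) \<Longrightarrow> Dn_hist N H vL vH sp s t ! t' \<subseteq> {..<N}"
  using hist_nth[of t' t N H vL vH sp s] Dn_sub len_hist by auto

definition F :: "nat \<Rightarrow> (nat \<Rightarrow> real) \<Rightarrow> real \<Rightarrow> (nat \<Rightarrow> real) \<Rightarrow> real \<Rightarrow> real
                    \<Rightarrow> nat set list \<Rightarrow> nat \<Rightarrow> real" where
 "F N H vL vH sp s hist i = (\<Sum>t'<length hist. \<Sum>j<N. ind_sim s i j *
     (if j \<in> hist ! t' then vH j - H i else (sp - 1) * (vL - H i)))"

lemma diff_F:
  assumes "\<And>t'. t' < length hist \<Longrightarrow> hist ! t' \<subseteq> {..<N}"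
  shows "U_n N H vL vH sp s hist i - U_c N H vL s hist i = F N H vL vH sp s hist i"
proof -
  have inner: "(\<Sum>j<N. ind_sim s i j *
     (if j \<in> hist ! t' then vH j - H i else (sp - 1) * (vL - H i)))
    = (sp - 1) * (\<Sum>j\<in>{..<N} - hist ! t'. ind_sim s i j * (vL - H i))
      + (\<Sum>j\<in>hist ! t'. ind_sim s i j * (vH j - H i))" if "t' < length hist" for t'
  proof -
    have sub: "hist ! t' \<subseteq> {..<N}" using assms that by blast
    have "(\<Sum>j<N. ind_sim s i j *
     (if j \<in> hist ! t' then vH j - H i else (sp - 1) * (vL - H i)))
      = (\<Sum>j<N. (if j \<in> hist ! t' then ind_sim s i j * (vH j - H i) else ind_sim s i j * ((sp - 1) * (vL - H i))))"
      by (rule sum.cong) auto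
    also have "\<dots> = (\<Sum>j\<in>{..<N} \<inter> {j. j \<in> hist ! t'}. ind_sim s i j * (vH j - H i))
       + (\<Sum>j\<in>{..<N} \<inter> - {j. j \<in> hist ! t'}. ind_sim s i j * ((sp - 1) * (vL - H i)))"
      by (rule sum.If_cases) simp
    also have "{..<N} \<inter> {j. j \<in> hist ! t'} = hist ! t'" using sub by auto
    also have "{..<N} \<inter> - {j. j \<in> hist ! t'} = {..<N} - hist ! t'" by auto
    finally show ?thesis by (simp add: sum_distrib_left algebra_simps)
  qed
  let ?A = "\<lambda>t'. (\<Sum>j\<in>{..<N} - hist ! t'. ind_sim s i j * (vL - H i))"
  let ?B = "\<lambda>t'. (\<Sum>j\<in>hist ! t'. ind_sim s i j * (vH j - H i))"
  have "F N H vL vH sp s hist i = (\<Sum>t'<length hist. (sp - 1) * ?A t' + ?B t')"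
    unfolding F_def by (rule sum.cong) (auto simp: inner)
  also have "\<dots> = (sp - 1) * (\<Sum>t'<length hist. ?A t') + (\<Sum>t'<length hist. ?B t')"
    by (simp add: sum.distrib sum_distrib_left)
  finally show ?thesis
    unfolding U_n_def U_c_def by (simp add: algebra_simps)
qed

theorem lemma2:
  fixes N G :: nat and grp :: "nat \<Rightarrow> nat" and Hg H vH vH' :: "nat \<Rightarrow> real"
    and vL sp sp' s :: real
  assumes "baseline_model N G grp Hg H vL vH sp s"
    and "baseline_model N G grp Hg H vL vH' sp' s"
    and "\<forall>i<N. vH' i \<ge> vH i"
    and "sp' \<ge> sp"
  shows "\<forall>t\<ge>1. Dn N H vL vH sp s t \<subseteq> Dn N H vL vH' sp' s t"
proof -
  let ?h1 = "Dn_hist N H vL vH sp s" and ?h2 = "Dn_hist N H vL vH' sp' s"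
  let ?D1 = "Dn N H vL vH sp s" and ?D2 = "Dn N H vL vH' sp' s"
  from assms(1) have bm: "\<forall>i<N. grp i < G" "\<forall>k l. k < l \<and> l < G \<longrightarrow> Hg l < Hg k"
    "\<forall>i<N. H i = Hg (grp i)" "Hg 1 < vL" "vL < Hg 0" "\<forall>i<N. vH i \<ge> Hg 0"
    "0 < sp" "sp < 1" "0 < s" "s \<le> 1" "G \<ge> 2"
    unfolding baseline_model_def by auto
  from assms(2) have bm2: "\<forall>i<N. vH' i \<ge> Hg 0" "sp' < 1"
    unfolding baseline_model_def by auto
  have Hcases: "H i = Hg 0 \<or> H i < vL" if "i < N" for i
  proof (cases "grp i = 0")
    case True then show ?thesis using bm(3) that by simp
  next
    case False
    have "Hg (grp i) \<le> Hg 1"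
    proof (cases "grp i = 1")
      case False
      then have "1 < grp i" using \<open>grp i \<noteq> 0\<close> by simp
      then show ?thesis using bm(1,2) that by (smt (verit))
    qed simp
    then show ?thesis using bm(3,4) that by simp
  qed
  have HleHg0: "H i \<le> Hg 0" if "i < N" for i
    using Hcases[OF that] bm(4,5) by auto
  have sim: "ind_sim s i j \<ge> 0" for i j using bm(9) by (simp add: ind_sim_def)
  have step: "?D1 (Suc t) \<subseteq> ?D2 (Suc t)" if IH: "\<forall>k\<le>t. ?D1 k \<subseteq> ?D2 k" for t
  proof
    fix i assume "i \<in> ?D1 (Suc t)"
    then have iN: "i < N" and pos1: "U_n N H vL vH sp s (?h1 t) i > U_c N H vL s (?h1 t) i"
      by (auto simp: Dn_Suc)
    have F1: "F N H vL vH sp s (?h1 t) i > 0"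
      using pos1 diff_F[of "?h1 t" N H vL vH sp s i] hist_sub by fastforce
    have l1: "length (?h1 t) = Suc t" and l2: "length (?h2 t) = Suc t" by (rule len_hist)+
    have F2: "F N H vL vH' sp' s (?h2 t) i > 0"
    proof (cases "H i = Hg 0")
      case True
      have nn: "0 \<le> ind_sim s i j *
         (if j \<in> ?h2 t ! t' then vH' j - H i else (sp' - 1) * (vL - H i))" if "j < N" for j t'
      proof -
        have "0 \<le> vH' j - H i" using bm2(1) that True by auto
        moreover have "0 \<le> (sp' - 1) * (vL - H i)" using bm(5) bm2(2) True
          by (intro mult_nonpos_nonpos) auto
        ultimately show ?thesis using sim by (simp add: zero_le_mult_iff)
      qed
      have h0: "?h2 t ! 0 = {}" using hist_nth[of 0 t] by (simp add: Dn_def)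
      have "0 < (\<Sum>j<N. ind_sim s i j *
         (if j \<in> ?h2 t ! 0 then vH' j - H i else (sp' - 1) * (vL - H i)))"
      proof (rule sum_pos2[where i=i])
        show "0 < ind_sim s i i *
         (if i \<in> ?h2 t ! 0 then vH' i - H i else (sp' - 1) * (vL - H i))"
          using h0 True bm(5) bm2(2) by (simp add: ind_sim_def mult_neg_neg)
      qed (use iN nn in auto)
      note pos0 = this
      show ?thesis unfolding F_def l2
      proof (rule sum_pos2[where i=0])
        show "0 < (\<Sum>j<N. ind_sim s i j *
         (if j \<in> ?h2 t ! 0 then vH' j - H i else (sp' - 1) * (vL - H i)))" by (rule pos0)
      next
        fix t' assume "t' \<in> {..<Suc t}"
        show "0 \<le> (\<Sum>j<N. ind_sim s i j *
         (if j \<in> ?h2 t ! t' then vH' j - H i else (sp' - 1) * (vL - H i)))"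
          by (rule sum_nonneg) (use nn in auto)
      qed auto
    next
      case False
      then have Hl: "H i < vL" using Hcases iN by blast
      have "F N H vL vH sp s (?h1 t) i \<le> F N H vL vH' sp' s (?h2 t) i"
        unfolding F_def l1 l2
      proof (intro sum_mono mult_left_mono sim)
        fix t' j assume t': "t' \<in> {..<Suc t}" and j: "j \<in> {..<N}"
        have sub: "?h1 t ! t' \<subseteq> ?h2 t ! t'" using t' IH hist_nth by auto
        have a: "vH j \<le> vH' j" using assms(3) j by auto
        have b: "0 \<le> vH' j - H i" using bm2(1) HleHg0[OF iN] j by auto
        have c: "(sp - 1) * (vL - H i) \<le> 0" using Hl bm(8) by (intro mult_nonpos_nonneg) auto
        have d: "(sp - 1) * (vL - H i) \<le> (sp' - 1) * (vL - H i)"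
          using Hl assms(4) by (intro mult_right_mono) auto
        show "(if j \<in> ?h1 t ! t' then vH j - H i else (sp - 1) * (vL - H i))
          \<le> (if j \<in> ?h2 t ! t' then vH' j - H i else (sp' - 1) * (vL - H i))"
          using sub a b c d by auto
      qed
      then show ?thesis using F1 by linarith
    qed
    then show "i \<in> ?D2 (Suc t)"
      using iN diff_F[of "?h2 t" N H vL vH' sp' s i] hist_sub by (fastforce simp: Dn_Suc)
  qed
  have "\<forall>k\<le>t. ?D1 k \<subseteq> ?D2 k" for t
  proof (induction t)
    case 0 then show ?case by (simp add: Dn_def)
  next
    case (Suc t)
    then show ?case using step by (metis le_Suc_eq)
  qed
  then show ?thesis by blast
qed

end
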